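(* Let $M$ be a matroid on ground set $E=\{1,\dots,n\}$, let $x^*\in P_B(M)$, and let $F\subseteq P_B(M)$ be the unique face of $P_B(M)$ of minimal affine dimension containing $x^*$, with $\dim(F)=d$. Then there exists a basis $B$ of $M$ with $\chi(B)\in F$ and \[ \|\chi(B)-x^*\|_1\le d. \]
   Context: $\chi(S)\in\{0,1\}^n$ denotes the characteristic vector of $S\subseteq E$. $P_B(M)$ is the base polytope, the convex hull of the characteristic vectors of all bases of $M$. *)

theory Defs
  imports "HOL-Analysis.Analysis"
begin

text \<open>A matroid on the finite ground set UNIV :: 'n set (playing the role of E = {1..n}),
  given by its family of bases (basis axioms: nonempty family, basis exchange).\<close>
definition matroid_bases :: "'n::finite set set \<Rightarrow> bool" where
  "matroid_bases \<B> \<longleftrightarrow> \<B> \<noteq> {} \<and>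
     (\<forall>B1\<in>\<B>. \<forall>B2\<in>\<B>. \<forall>x\<in>B1 - B2. \<exists>y\<in>B2 - B1. insert y (B1 - {x}) \<in> \<B>)"

definition chi :: "'n::finite set \<Rightarrow> real ^ 'n" where
  "chi S = (\<chi> i. if i \<in> S then 1 else 0)"

definition base_polytope :: "'n::finite set set \<Rightarrow> (real ^ 'n) set" where
  "base_polytope \<B> = convex hull (chi ` \<B>)"

definition l1_norm :: "real ^ 'n::finite \<Rightarrow> real" where
  "l1_norm v = (\<Sum>i\<in>UNIV. \<bar>v $ i\<bar>)"

end

theory Submission
  imports Defs
begin

lemma exch_weight:
  fixes \<B> :: "'n::finite set set" and w :: "'n \<Rightarrow> real"
  assumes mb: "matroid_bases \<B>"
    and le: "\<forall>B\<in>\<B>. sum w B \<le> m"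
  shows "B1 \<in> \<B> \<Longrightarrow> sum w B1 = m \<Longrightarrow> B2 \<in> \<B> \<Longrightarrow> sum w B2 = m \<Longrightarrow> e \<in> B1 \<Longrightarrow> e \<notin> B2 \<Longrightarrow>
    \<exists>A\<in>\<B>. \<exists>y. sum w A = m \<and> e \<in> A \<and> y \<notin> A \<and> insert y (A - {e}) \<in> \<B> \<and> sum w (insert y (A - {e})) = m"
proof (induction "card (B1 - B2)" arbitrary: B1 B2 rule: less_induct)
  case less
  let ?P = "\<exists>A\<in>\<B>. \<exists>y. sum w A = m \<and> e \<in> A \<and> y \<notin> A \<and> insert y (A - {e}) \<in> \<B> \<and> sum w (insert y (A - {e})) = m"
  have ax: "\<forall>B1\<in>\<B>. \<forall>B2\<in>\<B>. \<forall>x\<in>B1 - B2. \<exists>y\<in>B2 - B1. insert y (B1 - {x}) \<in> \<B>"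
    using mb unfolding matroid_bases_def by blast
  have sw: "sum w (insert g (B - {f})) = sum w B - w f + w g" if "f \<in> B" "g \<notin> B" for B f g
  proof -
    have "sum w (insert g (B - {f})) = w g + sum w (B - {f})" using that by (simp add: sum.insert_remove)
    also have "sum w (B - {f}) = sum w B - w f" using that by (simp add: sum_diff1)
    finally show ?thesis by simp
  qed
  show ?P
  proof (rule ccontr)
    assume nP: "\<not> ?P"
    have i: "w g < w f" if f: "f \<in> B1 - B2" and g: "g \<in> B2 - B1" and b: "insert g (B1 - {f}) \<in> \<B>" for f g
    proof -
      have "w g \<le> w f" using le b sw[of f B1 g] f g less.prems by auto
      moreover have "w g \<noteq> w f"
      proof
        assume eq: "w g = w f"
        let ?B = "insert g (B1 - {f})"
        have sB: "sum w ?B = m" using sw[of f B1 g] f g eq less.prems by auto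
        show False
        proof (cases "f = e")
          case True
          then show False using nP less.prems b sB g by blast
        next
          case False
          have "?B - B2 = (B1 - B2) - {f}" using g by auto
          hence "card (?B - B2) < card (B1 - B2)" using f card_Diff1_less[OF finite, of f "B1 - B2"] by simp
          from less.hyps[OF this b sB less.prems(3,4)] False less.prems nP show False by auto
        qed
      qed
      ultimately show ?thesis by simp
    qed
    have ii: "w f < w g" if f: "f \<in> B1 - B2" and g: "g \<in> B2 - B1" and b: "insert f (B2 - {g}) \<in> \<B>" for f g
    proof -
      have "w f \<le> w g" using le b sw[of g B2 f] f g less.prems by auto
      moreover have "w g \<noteq> w f"
      proof
        assume eq: "w g = w f"
        let ?B = "insert f (B2 - {g})"
        have sB: "sum w ?B = m" using sw[of g B2 f] f g eq less.prems by auto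
        show False
        proof (cases "f = e")
          case True
          have "insert g (?B - {e}) = B2" using True g less.prems by auto
          moreover have "g \<notin> ?B" using f g True by auto
          moreover have "e \<in> ?B" using True by simp
          ultimately have ?P using b sB less.prems(3,4) by (intro bexI[OF _ b] exI[of _ g]) simp
          with nP show False by blast
        next
          case False
          have "B1 - ?B = (B1 - B2) - {f}" using g by auto
          hence "card (B1 - ?B) < card (B1 - B2)" using f card_Diff1_less[OF finite, of f "B1 - B2"] by simp
          from less.hyps[OF this less.prems(1,2) b sB] False less.prems nP show False by auto
        qed
      qed
      ultimately show ?thesis by simp
    qed
    let ?U = "(B1 - B2) \<union> (B2 - B1)"
    have ne: "?U \<noteq> {}" using less.prems by auto
    obtain z where z: "z \<in> ?U" "\<forall>u\<in>?U. w z \<le> w u"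
    proof -
      have "Min (w ` ?U) \<in> w ` ?U" using ne by (intro Min_in) auto
      then obtain z where "z \<in> ?U" "w z = Min (w ` ?U)" by (metis imageE)
      moreover have "\<forall>u\<in>?U. Min (w ` ?U) \<le> w u" by auto
      ultimately show ?thesis using that by metis
    qed
    show False
    proof (cases "z \<in> B1 - B2")
      case True
      then obtain g where "g \<in> B2 - B1" "insert g (B1 - {z}) \<in> \<B>" using ax less.prems by blast
      with i[OF True] z show False by force
    next
      case False
      hence zz: "z \<in> B2 - B1" using z by auto
      then obtain f where "f \<in> B1 - B2" "insert f (B2 - {z}) \<in> \<B>" using ax less.prems by blast
      with ii[OF _ zz] z show False by force
    qed
  qed
qed


lemma sparse_dim:
  fixes D V :: "(real ^ 'n::finite) set" and T :: "'n set"
  assumes DV: "D \<subseteq> span V"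
    and sp: "\<forall>v\<in>D. card {j. v $ j \<noteq> 0} \<le> 2"
    and cov: "\<forall>j\<in>T. \<exists>v\<in>D. v $ j \<noteq> 0"
  shows "card T \<le> 2 * dim V"
proof -
  obtain I where I: "I \<subseteq> D" "independent I" "D \<subseteq> span I" "card I = dim D"
    by (rule basis_exists)
  have fI: "finite I" using I(2) by (simp add: independent_imp_finite)
  have sub: "T \<subseteq> (\<Union>u\<in>I. {j. u $ j \<noteq> 0})"
  proof
    fix j assume "j \<in> T"
    then obtain v where v: "v \<in> D" "v $ j \<noteq> 0" using cov by blast
    show "j \<in> (\<Union>u\<in>I. {j. u $ j \<noteq> 0})"
    proof (rule ccontr)
      assume "j \<notin> (\<Union>u\<in>I. {j. u $ j \<noteq> 0})"
      hence "I \<subseteq> {w. w $ j = 0}" by auto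
      moreover have "subspace {w :: real ^ 'n. w $ j = 0}" by (auto simp: subspace_def)
      ultimately have "span I \<subseteq> {w. w $ j = 0}" by (rule span_minimal)
      with v I(3) show False by auto
    qed
  qed
  have "card T \<le> card (\<Union>u\<in>I. {j. u $ j \<noteq> 0})" by (rule card_mono[OF _ sub]) simp
  also have "\<dots> \<le> (\<Sum>u\<in>I. card {j. u $ j \<noteq> 0})" by (rule card_UN_le[OF fI])
  also have "\<dots> \<le> (\<Sum>u\<in>I. 2)" using sp I(1) by (intro sum_mono) auto
  also have "\<dots> = 2 * card I" by simp
  also have "card I = dim D" by (rule I(4))
  also have "dim D \<le> dim (span V)" by (rule dim_subset[OF DV])
  also have "dim (span V) = dim V" by simp
  finally show ?thesis by simp
qed


lemma chi_inner: "a \<bullet> chi B = sum (($) a) B"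
proof -
  have "a \<bullet> chi B = (\<Sum>i\<in>UNIV. a $ i * (if i \<in> B then 1 else 0))"
    by (simp add: inner_vec_def chi_def)
  also have "\<dots> = (\<Sum>i\<in>UNIV. if i \<in> B then a $ i else 0)" by (intro sum.cong) auto
  also have "\<dots> = sum (($) a) B" by (simp add: sum.If_cases)
  finally show ?thesis .
qed

lemma chi_nth: "chi B $ i = (if i \<in> B then 1 else 0)"
  by (simp add: chi_def)

lemma chi_inj: "inj_on chi A"
proof
  fix S T assume "S \<in> A" "T \<in> A" "chi S = chi T"
  hence "\<forall>i. (if i \<in> S then 1 else 0 :: real) = (if i \<in> T then 1 else 0)"
    by (metis chi_nth)
  thus "S = T" by (metis one_neq_zero subsetI subset_antisym)
qed

theorem lemma5:
  fixes \<B> :: "'n::finite set set" and x :: "real ^ 'n" and F :: "(real ^ 'n) set" and d :: nat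
  assumes "matroid_bases \<B>"
    and "x \<in> base_polytope \<B>"
    and "F face_of base_polytope \<B>" and "x \<in> F"
    and "\<forall>G. G face_of base_polytope \<B> \<and> x \<in> G \<longrightarrow> aff_dim F \<le> aff_dim G"
    and "aff_dim F = int d"
  shows "\<exists>B\<in>\<B>. chi B \<in> F \<and> l1_norm (chi B - x) \<le> real d"
proof -
  note mb = assms(1)
  let ?P = "base_polytope \<B>"
  have finB: "finite \<B>" by simp
  have "polyhedron ?P" unfolding base_polytope_def by (rule polyhedron_convex_hull) simp
  hence "F exposed_face_of ?P" using assms(3) exposed_face_of_polyhedron by blast
  then obtain a b where ab: "?P \<subseteq> {p. a \<bullet> p \<le> b}" "F = ?P \<inter> {p. a \<bullet> p = b}"
    unfolding exposed_face_of_def by blast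
  define w where "w = (($) a)"
  have cw: "a \<bullet> chi B = sum w B" for B unfolding w_def by (rule chi_inner)
  have chiP: "chi B \<in> ?P" if "B \<in> \<B>" for B
    unfolding base_polytope_def using that by (intro hull_inc) auto
  have le: "\<forall>B\<in>\<B>. sum w B \<le> m" if "m = b" for m using chiP ab(1) cw that by fastforce
  have inF: "chi B \<in> F" if "B \<in> \<B>" "sum w B = b" for B using chiP[OF that(1)] ab(2) cw that(2) by auto
  obtain u where u: "\<forall>v\<in>chi ` \<B>. 0 \<le> u v" "sum u (chi ` \<B>) = 1" "(\<Sum>v\<in>chi ` \<B>. u v *\<^sub>R v) = x"
    using assms(2) unfolding base_polytope_def convex_hull_finite[OF finite_imageI[OF finB]] by blast
  define \<mu> where "\<mu> B = u (chi B)" for B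
  have mu0: "\<forall>B\<in>\<B>. 0 \<le> \<mu> B" using u(1) unfolding \<mu>_def by auto
  have mu1: "sum \<mu> \<B> = 1" using u(2) sum.reindex[OF chi_inj, of u \<B>] unfolding \<mu>_def by (simp add: o_def)
  have xs: "x = (\<Sum>B\<in>\<B>. \<mu> B *\<^sub>R chi B)"
    using u(3) sum.reindex[OF chi_inj, of "\<lambda>v. u v *\<^sub>R v" \<B>] unfolding \<mu>_def by (simp add: o_def)
  define X where "X i = x $ i" for i
  have Xs: "X i = (\<Sum>B\<in>\<B>. \<mu> B * (if i \<in> B then 1 else 0))" for i
    unfolding X_def by (subst xs) (simp add: chi_nth)
  have X0: "0 \<le> X i" for i unfolding Xs using mu0 by (intro sum_nonneg) auto
  have X1: "X i \<le> 1" for i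
  proof -
    have "X i \<le> sum \<mu> \<B>" unfolding Xs using mu0 by (intro sum_mono) auto
    thus ?thesis using mu1 by simp
  qed
  have compl: "(\<Sum>B\<in>\<B>. \<mu> B * (if i \<in> B then 0 else 1)) = 1 - X i" for i
  proof -
    have "(\<Sum>B\<in>\<B>. \<mu> B * (if i \<in> B then 0 else 1)) = (\<Sum>B\<in>\<B>. \<mu> B - \<mu> B * (if i \<in> B then 1 else 0))"
      by (intro sum.cong) auto
    also have "\<dots> = 1 - X i" unfolding Xs sum_subtractf mu1 ..
    finally show ?thesis .
  qed
  have axb: "a \<bullet> x = b" using assms(4) ab(2) by auto
  have suppS: "sum w B = b" if "B \<in> \<B>" "\<mu> B \<noteq> 0" for B
  proof -
    have "a \<bullet> x = (\<Sum>B\<in>\<B>. \<mu> B * sum w B)"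
      by (subst xs) (simp add: inner_sum_right cw)
    hence "(\<Sum>B\<in>\<B>. \<mu> B * (b - sum w B)) = 0"
      using axb mu1 by (simp add: right_diff_distrib sum_subtractf sum_distrib_right[symmetric])
    moreover have "\<forall>B\<in>\<B>. 0 \<le> \<mu> B * (b - sum w B)" using mu0 le by auto
    ultimately have "\<forall>B\<in>\<B>. \<mu> B * (b - sum w B) = 0" using sum_nonneg_eq_0_iff[OF finB, of "\<lambda>B. \<mu> B * (b - sum w B)"] by simp
    thus ?thesis using that by auto
  qed
  define T where "T = {i. 0 < X i \<and> X i < 1}"
  define V where "V = (\<lambda>z. z - x) ` F"
  define D where "D = {v. \<exists>A\<in>\<B>. \<exists>y j. sum w A = b \<and> j \<in> A \<and> y \<notin> A \<and> insert y (A - {j}) \<in> \<B>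
      \<and> sum w (insert y (A - {j})) = b \<and> v = chi A - chi (insert y (A - {j}))}"
  have DV: "D \<subseteq> span V"
  proof
    fix v assume "v \<in> D"
    then obtain A y j where A: "A \<in> \<B>" "sum w A = b" "insert y (A - {j}) \<in> \<B>"
      "sum w (insert y (A - {j})) = b" "v = chi A - chi (insert y (A - {j}))" unfolding D_def by blast
    have "v = (chi A - x) - (chi (insert y (A - {j})) - x)" using A(5) by simp
    moreover have "chi A - x \<in> V" "chi (insert y (A - {j})) - x \<in> V"
      unfolding V_def using inF A by auto
    ultimately show "v \<in> span V" by (metis span_base span_diff)
  qed
  have sp: "\<forall>v\<in>D. card {k. v $ k \<noteq> 0} \<le> 2"
  proof
    fix v assume "v \<in> D"
    then obtain A y j where A: "v = chi A - chi (insert y (A - {j}))" unfolding D_def by blast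
    have "{k. v $ k \<noteq> 0} \<subseteq> {j, y}" unfolding A by (auto simp: chi_nth split: if_splits)
    hence "card {k. v $ k \<noteq> 0} \<le> card {j, y}" by (intro card_mono) auto
    also have "\<dots> \<le> 2" by (simp add: card_insert_if)
    finally show "card {k. v $ k \<noteq> 0} \<le> 2" .
  qed
  have cov: "\<forall>j\<in>T. \<exists>v\<in>D. v $ j \<noteq> 0"
  proof
    fix j assume "j \<in> T"
    hence j: "0 < X j" "X j < 1" unfolding T_def by auto
    obtain B1 where B1: "B1 \<in> \<B>" "\<mu> B1 \<noteq> 0" "j \<in> B1"
    proof (rule ccontr)
      assume "\<not> thesis"
      hence "\<forall>B\<in>\<B>. \<mu> B * (if j \<in> B then 1 else 0) = 0" using that by auto
      hence "X j = 0" unfolding Xs by (rule sum.neutral)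
      with j show False by simp
    qed
    obtain B2 where B2: "B2 \<in> \<B>" "\<mu> B2 \<noteq> 0" "j \<notin> B2"
    proof (rule ccontr)
      assume "\<not> thesis"
      hence "\<forall>B\<in>\<B>. \<mu> B * (if j \<in> B then 0 else 1) = 0" using that by auto
      hence "(\<Sum>B\<in>\<B>. \<mu> B * (if j \<in> B then 0 else 1)) = 0" by (rule sum.neutral)
      hence "1 - X j = 0" using compl[of j] by linarith
      with j show False by simp
    qed
    obtain A y where Ay: "A \<in> \<B>" "sum w A = b" "j \<in> A" "y \<notin> A" "insert y (A - {j}) \<in> \<B>"
      "sum w (insert y (A - {j})) = b"
      using exch_weight[OF mb le[OF refl] B1(1) suppS[OF B1(1,2)] B2(1) suppS[OF B2(1,2)] B1(3) B2(3)] by blast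
    let ?v = "chi A - chi (insert y (A - {j}))"
    have "?v \<in> D" unfolding D_def using Ay by blast
    moreover have "?v $ j \<noteq> 0" using Ay(3,4) by (auto simp: chi_nth)
    ultimately show "\<exists>v\<in>D. v $ j \<noteq> 0" by blast
  qed
  have cardT: "card T \<le> 2 * dim V" by (rule sparse_dim[OF DV sp cov])
  have "aff_dim F = int (dim V)" unfolding V_def
    by (rule aff_dim_eq_dim_subtract) (simp add: assms(4) hull_inc)
  hence dV: "dim V = d" using assms(6) by simp
  have l1B: "l1_norm (chi B - x) = (\<Sum>i\<in>UNIV. X i + (if i \<in> B then 1 else 0) * (1 - 2 * X i))" for B
    unfolding l1_norm_def X_def
    using X0 X1 unfolding X_def by (intro sum.cong) (auto simp: chi_nth)
  have avg: "(\<Sum>B\<in>\<B>. \<mu> B * l1_norm (chi B - x)) = (\<Sum>i\<in>UNIV. 2 * X i * (1 - X i))"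
  proof -
    have "(\<Sum>B\<in>\<B>. \<mu> B * l1_norm (chi B - x))
        = (\<Sum>B\<in>\<B>. \<Sum>i\<in>UNIV. \<mu> B * X i + \<mu> B * (if i \<in> B then 1 else 0) * (1 - 2 * X i))"
      unfolding l1B by (simp add: sum_distrib_left algebra_simps)
    also have "\<dots> = (\<Sum>i\<in>UNIV. \<Sum>B\<in>\<B>. \<mu> B * X i + \<mu> B * (if i \<in> B then 1 else 0) * (1 - 2 * X i))"
      by (rule sum.swap)
    also have "\<dots> = (\<Sum>i\<in>UNIV. X i * sum \<mu> \<B> + X i * (1 - 2 * X i))"
    proof (rule sum.cong[OF refl])
      fix i :: 'n
      have "(\<Sum>B\<in>\<B>. \<mu> B * X i + \<mu> B * (if i \<in> B then 1 else 0) * (1 - 2 * X i))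
          = (\<Sum>B\<in>\<B>. \<mu> B) * X i + (\<Sum>B\<in>\<B>. \<mu> B * (if i \<in> B then 1 else 0)) * (1 - 2 * X i)"
        by (simp add: sum.distrib sum_distrib_right)
      also have "(\<Sum>B\<in>\<B>. \<mu> B * (if i \<in> B then 1 else 0)) = X i" by (rule Xs[symmetric])
      finally show "(\<Sum>B\<in>\<B>. \<mu> B * X i + \<mu> B * (if i \<in> B then 1 else 0) * (1 - 2 * X i))
          = X i * sum \<mu> \<B> + X i * (1 - 2 * X i)" by (simp add: mult.commute)
    qed
    also have "\<dots> = (\<Sum>i\<in>UNIV. 2 * X i * (1 - X i))"
      using mu1 by (simp add: algebra_simps)
    finally show ?thesis .
  qed
  have bnd: "(\<Sum>i\<in>UNIV. 2 * X i * (1 - X i)) \<le> real d"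
  proof -
    have "(\<Sum>i\<in>UNIV. 2 * X i * (1 - X i)) \<le> (\<Sum>i\<in>UNIV. if i \<in> T then 1/2 else 0)"
    proof (intro sum_mono)
      fix i :: 'n
      show "2 * X i * (1 - X i) \<le> (if i \<in> T then 1/2 else 0)"
      proof (cases "i \<in> T")
        case True
        have "0 \<le> (2 * X i - 1)^2" by simp
        thus ?thesis using True by (simp add: power2_eq_square algebra_simps)
      next
        case False
        hence "X i = 0 \<or> X i = 1" using X0[of i] X1[of i] unfolding T_def by auto
        thus ?thesis using False by auto
      qed
    qed
    also have "\<dots> = real (card T) / 2" by (simp add: sum.If_cases)
    also have "\<dots> \<le> real d" using cardT dV by simp
    finally show ?thesis .
  qed
  show ?thesis
  proof (rule ccontr)
    assume nt: "\<not> ?thesis"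
    have "(\<Sum>B\<in>\<B>. \<mu> B * real d) < (\<Sum>B\<in>\<B>. \<mu> B * l1_norm (chi B - x))"
    proof (rule sum_strict_mono_ex1[OF finB])
      show "\<forall>B\<in>\<B>. \<mu> B * real d \<le> \<mu> B * l1_norm (chi B - x)"
      proof
        fix B assume B: "B \<in> \<B>"
        show "\<mu> B * real d \<le> \<mu> B * l1_norm (chi B - x)"
        proof (cases "\<mu> B = 0")
          case False
          hence "real d < l1_norm (chi B - x)" using nt B inF suppS by force
          thus ?thesis using mu0 B by (intro mult_left_mono) auto
        qed simp
      qed
      obtain B where B: "B \<in> \<B>" "\<mu> B \<noteq> 0"
        using mu1 by (metis sum.neutral zero_neq_one)
      hence "real d < l1_norm (chi B - x)" using nt inF suppS by force
      moreover have "0 < \<mu> B" using B mu0 by force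
      ultimately show "\<exists>B\<in>\<B>. \<mu> B * real d < \<mu> B * l1_norm (chi B - x)" using B by (meson mult_strict_left_mono)
    qed
    also have "\<dots> \<le> real d" using avg bnd by simp
    finally show False using mu1 by (simp add: sum_distrib_right[symmetric])
  qed
qed

end
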